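(* Let $I\subset S$ be a nonzero proper graded ideal. Then there exists a constant $c$ such that $\mathrm{v}(I^k)\ge\alpha(I)k+c$ for all $k\gg0$.
   Context: $S=K[x_1,\dots,x_n]$ is a standard graded polynomial ring over a field $K$, $S_d$ its degree-$d$ component. For a graded ideal $J\subset S$, $\mathrm{v}(J)=\min\{d:\exists f\in S_d\text{ with }(J:f)\in\operatorname{Ass}(J)\}$. $\alpha(I)$ is the least degree of a nonzero homogeneous element of $I$. *)

theory Defs
  imports Main "HOL-Library.Poly_Mapping"
begin

text \<open>Polynomial ring S = K[x_v : v in 'v] with 'v a finite type of variables
  (n = CARD('v)), realised as ('v =>0 nat) =>0 a (monomial exponent vectors to coefficients).\<close>

type_synonym ('v, 'a) mpoly = "('v \<Rightarrow>\<^sub>0 nat) \<Rightarrow>\<^sub>0 'a"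

definition is_ideal :: "'r::comm_ring_1 set \<Rightarrow> bool" where
  "is_ideal I \<longleftrightarrow> 0 \<in> I \<and> (\<forall>a\<in>I. \<forall>b\<in>I. a + b \<in> I) \<and> (\<forall>a\<in>I. \<forall>r. r * a \<in> I)"

definition ideal_gen :: "'r::comm_ring_1 set \<Rightarrow> 'r set" where
  "ideal_gen G = \<Inter> {I. is_ideal I \<and> G \<subseteq> I}"

definition ideal_mult :: "'r::comm_ring_1 set \<Rightarrow> 'r set \<Rightarrow> 'r set" where
  "ideal_mult I J = ideal_gen {a * b | a b. a \<in> I \<and> b \<in> J}"

primrec ideal_pow :: "'r::comm_ring_1 set \<Rightarrow> nat \<Rightarrow> 'r set" where
  "ideal_pow I 0 = UNIV"
| "ideal_pow I (Suc k) = ideal_mult (ideal_pow I k) I"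

definition colon :: "'r::comm_ring_1 set \<Rightarrow> 'r \<Rightarrow> 'r set" where
  "colon J f = {g. g * f \<in> J}"

definition prime_ideal :: "'r::comm_ring_1 set \<Rightarrow> bool" where
  "prime_ideal P \<longleftrightarrow> is_ideal P \<and> P \<noteq> UNIV \<and> (\<forall>a b. a * b \<in> P \<longrightarrow> a \<in> P \<or> b \<in> P)"

definition Ass :: "'r::comm_ring_1 set \<Rightarrow> 'r set set" where
  "Ass J = {P. prime_ideal P \<and> (\<exists>f. P = colon J f)}"

definition mdeg :: "('v \<Rightarrow>\<^sub>0 nat) \<Rightarrow> nat" where
  "mdeg m = sum (Poly_Mapping.lookup m) (Poly_Mapping.keys m)"

definition homogeneous_of :: "nat \<Rightarrow> ('v, 'a::zero) mpoly \<Rightarrow> bool" where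
  "homogeneous_of d f \<longleftrightarrow> (\<forall>m \<in> Poly_Mapping.keys f. mdeg m = d)"

definition Sdeg :: "nat \<Rightarrow> ('v, 'a::zero) mpoly set" where
  "Sdeg d = {f. homogeneous_of d f}"

definition graded_ideal :: "('v, 'a::comm_ring_1) mpoly set \<Rightarrow> bool" where
  "graded_ideal I \<longleftrightarrow> is_ideal I \<and> I = ideal_gen {f \<in> I. \<exists>d. homogeneous_of d f}"

definition vnum :: "('v, 'a::comm_ring_1) mpoly set \<Rightarrow> nat" where
  "vnum J = (LEAST d. \<exists>f \<in> Sdeg d. colon J f \<in> Ass J)"

definition alpha :: "('v, 'a::comm_ring_1) mpoly set \<Rightarrow> nat" where
  "alpha I = (LEAST d. \<exists>f \<in> I. f \<noteq> 0 \<and> f \<in> Sdeg d)"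

end

theory Submission
  imports Defs "HOL-Library.Countable_Set"
begin


lemma ideal_gen_ideal: "is_ideal (ideal_gen G)"
  unfolding is_ideal_def ideal_gen_def by auto

lemma ideal_gen_sub: "G \<subseteq> ideal_gen G"
  unfolding ideal_gen_def by auto

lemma ideal_gen_least: "is_ideal J \<Longrightarrow> G \<subseteq> J \<Longrightarrow> ideal_gen G \<subseteq> J"
  unfolding ideal_gen_def by auto

lemma ideal_gen_mono: "G \<subseteq> G' \<Longrightarrow> ideal_gen G \<subseteq> ideal_gen G'"
  unfolding ideal_gen_def by auto

lemma ideal_0: "is_ideal I \<Longrightarrow> 0 \<in> I" unfolding is_ideal_def by auto
lemma ideal_add: "is_ideal I \<Longrightarrow> a \<in> I \<Longrightarrow> b \<in> I \<Longrightarrow> a + b \<in> I" unfolding is_ideal_def by auto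
lemma ideal_mul: "is_ideal I \<Longrightarrow> a \<in> I \<Longrightarrow> r * a \<in> I" unfolding is_ideal_def by auto
lemma ideal_mul2: "is_ideal I \<Longrightarrow> a \<in> I \<Longrightarrow> a * r \<in> I"
  using ideal_mul[of I a r] by (simp add: mult.commute)
lemma ideal_neg: "is_ideal I \<Longrightarrow> a \<in> I \<Longrightarrow> - a \<in> I"
  using ideal_mul[of I a "-1"] by simp
lemma ideal_diff: "is_ideal I \<Longrightarrow> a \<in> I \<Longrightarrow> b \<in> I \<Longrightarrow> a - b \<in> I"
  using ideal_add[of I a "-b"] ideal_neg[of I b] by simp
lemma ideal_sum: "is_ideal I \<Longrightarrow> (\<And>x. x \<in> A \<Longrightarrow> f x \<in> I) \<Longrightarrow> sum f A \<in> I"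
  by (induction A rule: infinite_finite_induct) (auto intro: ideal_0 ideal_add)
lemma ideal_UNIV: "is_ideal UNIV" unfolding is_ideal_def by auto
lemma ideal_one: "is_ideal I \<Longrightarrow> 1 \<in> I \<Longrightarrow> I = UNIV"
  using ideal_mul[of I 1] by auto

lemma ideal_pow_ideal: "is_ideal (ideal_pow I k)"
  by (cases k) (simp_all add: ideal_UNIV ideal_mult_def ideal_gen_ideal)

lemma ideal_mult_in: "a \<in> I \<Longrightarrow> b \<in> J \<Longrightarrow> a * b \<in> ideal_mult I J"
  unfolding ideal_mult_def by (rule subsetD[OF ideal_gen_sub]) blast

lemma ideal_mult_mono: "I \<subseteq> I' \<Longrightarrow> J \<subseteq> J' \<Longrightarrow> ideal_mult I J \<subseteq> ideal_mult I' J'"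
  unfolding ideal_mult_def by (rule ideal_gen_mono) blast

lemma ideal_mult_least: "is_ideal K \<Longrightarrow> (\<And>a b. a \<in> I \<Longrightarrow> b \<in> J \<Longrightarrow> a * b \<in> K) \<Longrightarrow> ideal_mult I J \<subseteq> K"
  unfolding ideal_mult_def by (rule ideal_gen_least) auto

lemma power_in_ideal_pow: "a \<in> I \<Longrightarrow> a ^ k \<in> ideal_pow I k"
proof (induction k)
  case (Suc k)
  then show ?case using ideal_mult_in[of "a^k" "ideal_pow I k" a I] by (simp add: mult.commute)
qed simp

lemma colon_ideal: "is_ideal J \<Longrightarrow> is_ideal (colon J f)"
  unfolding is_ideal_def colon_def by (auto simp: distrib_right mult.assoc)

lemma colon_sup: "is_ideal J \<Longrightarrow> J \<subseteq> colon J f"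
  unfolding colon_def using ideal_mul2 by blast

lemma prime_pow: "prime_ideal P \<Longrightarrow> a ^ k \<in> P \<Longrightarrow> 0 < k \<Longrightarrow> a \<in> P"
proof (induction k)
  case (Suc k) then show ?case unfolding prime_ideal_def by (cases k) auto
qed simp

lemma mdeg_univ: "mdeg (m::'v::finite \<Rightarrow>\<^sub>0 nat) = sum (Poly_Mapping.lookup m) UNIV"
  unfolding mdeg_def by (rule sum.mono_neutral_left) (auto simp: in_keys_iff)

lemma mdeg_add: "mdeg ((a::'v::finite \<Rightarrow>\<^sub>0 nat) + b) = mdeg a + mdeg b"
  by (simp add: mdeg_univ lookup_add sum.distrib)

lemma mdeg_0_iff: "mdeg (m::'v::finite \<Rightarrow>\<^sub>0 nat) = 0 \<longleftrightarrow> m = 0"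
  by (auto simp: mdeg_univ poly_mapping_eq_iff fun_eq_iff)

lemma lookup_le_mdeg: "Poly_Mapping.lookup (m::'v::finite \<Rightarrow>\<^sub>0 nat) v \<le> mdeg m"
  unfolding mdeg_univ by (rule member_le_sum) auto

lemma finite_mdeg: "finite {m::'v::finite \<Rightarrow>\<^sub>0 nat. mdeg m = d}"
proof -
  have fin: "finite {f::'v \<Rightarrow> nat. \<forall>x. (x \<in> UNIV \<longrightarrow> f x \<in> {0..d}) \<and> (x \<notin> UNIV \<longrightarrow> f x = 0)}"
    by (rule finite_set_of_finite_funs) auto
  have "{m::'v \<Rightarrow>\<^sub>0 nat. mdeg m = d} \<subseteq> Abs_poly_mapping ` {f::'v \<Rightarrow> nat. \<forall>x. (x \<in> UNIV \<longrightarrow> f x \<in> {0..d}) \<and> (x \<notin> UNIV \<longrightarrow> f x = 0)}"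
  proof
    fix m :: "'v \<Rightarrow>\<^sub>0 nat" assume "m \<in> {m. mdeg m = d}"
    then have "\<forall>x. Poly_Mapping.lookup m x \<in> {0..d}" using lookup_le_mdeg[of m] by auto
    then show "m \<in> Abs_poly_mapping ` {f::'v \<Rightarrow> nat. \<forall>x. (x \<in> UNIV \<longrightarrow> f x \<in> {0..d}) \<and> (x \<notin> UNIV \<longrightarrow> f x = 0)}" by (intro image_eqI[of _ _ "Poly_Mapping.lookup m"]) (auto simp: lookup_inverse)
  qed
  then show ?thesis using fin finite_surj by blast
qed



definition hcomp :: "nat \<Rightarrow> ('v, 'a::zero) mpoly \<Rightarrow> ('v, 'a) mpoly" where
  "hcomp d p = Abs_poly_mapping (\<lambda>m. if mdeg m = d then Poly_Mapping.lookup p m else 0)"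

lemma lookup_comp [simp]:
  "Poly_Mapping.lookup (hcomp d p) m = (if mdeg m = d then Poly_Mapping.lookup p m else 0)"
proof -
  have "finite {m. (if mdeg m = d then Poly_Mapping.lookup p m else 0) \<noteq> 0}"
    by (rule finite_subset[OF _ finite_keys[of p]]) (auto simp: in_keys_iff split: if_splits)
  then show ?thesis by (simp add: hcomp_def)
qed

lemma keys_comp: "Poly_Mapping.keys (hcomp d p) = {m \<in> Poly_Mapping.keys p. mdeg m = d}"
  by (rule set_eqI) (simp add: in_keys_iff)

lemma comp_add: "hcomp d (p + q) = hcomp d p + hcomp d (q::('v,'a::comm_monoid_add) mpoly)"
  by (rule poly_mapping_eqI) (simp add: lookup_add)

lemma comp_diff: "hcomp d (p - q) = hcomp d p - hcomp d (q::('v,'a::ab_group_add) mpoly)"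
  by (rule poly_mapping_eqI) (simp add: lookup_minus)

lemma comp_zero [simp]: "hcomp d 0 = 0"
  by (rule poly_mapping_eqI) simp

lemma comp_sum: "hcomp d (sum f A) = (\<Sum>x\<in>A. hcomp d (f x :: ('v,'a::comm_monoid_add) mpoly))"
  by (rule poly_mapping_eqI) (simp add: lookup_sum sum.neutral)

definition hom :: "('v, 'a::zero) mpoly \<Rightarrow> bool" where
  "hom p \<longleftrightarrow> (\<exists>d. homogeneous_of d p)"

lemma homog_comp: "homogeneous_of d (hcomp d p)"
  unfolding homogeneous_of_def by (auto simp: keys_comp)

lemma comp_homog_same: "homogeneous_of d p \<Longrightarrow> hcomp d p = p"
  unfolding homogeneous_of_def by (intro poly_mapping_eqI) (auto simp: in_keys_iff)

lemma comp_homog_other: "homogeneous_of e p \<Longrightarrow> e \<noteq> d \<Longrightarrow> hcomp d p = 0"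
  unfolding homogeneous_of_def by (intro poly_mapping_eqI) (auto simp: in_keys_iff)

lemma comp_decomp: "p = (\<Sum>d \<in> mdeg ` Poly_Mapping.keys p. hcomp d (p::('v,'a::comm_monoid_add) mpoly))"
proof (rule poly_mapping_eqI)
  fix m
  show "Poly_Mapping.lookup p m = Poly_Mapping.lookup (\<Sum>d \<in> mdeg ` Poly_Mapping.keys p. hcomp d p) m"
  proof (cases "m \<in> Poly_Mapping.keys p")
    case True
    then show ?thesis by (simp add: lookup_sum)
  next
    case False
    then show ?thesis by (simp add: lookup_sum in_keys_iff)
  qed
qed

lemma homog_zero [simp]: "homogeneous_of d 0"
  unfolding homogeneous_of_def by simp

lemma homog_add: "homogeneous_of d p \<Longrightarrow> homogeneous_of d q \<Longrightarrow> homogeneous_of d (p + q)"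
  unfolding homogeneous_of_def using keys_add[of p q] by fast

lemma homog_diff: "homogeneous_of d p \<Longrightarrow> homogeneous_of d q \<Longrightarrow> homogeneous_of d (p - (q::('v,'a::ab_group_add) mpoly))"
  unfolding homogeneous_of_def using keys_diff[of p q] by fast

lemma keys_mult_mdeg:
  "m \<in> Poly_Mapping.keys (p * q) \<Longrightarrow>
     \<exists>a b. a \<in> Poly_Mapping.keys p \<and> b \<in> Poly_Mapping.keys (q::('v::finite,'a::comm_ring_1) mpoly) \<and> mdeg m = mdeg a + mdeg b"
proof -
  assume "m \<in> Poly_Mapping.keys (p * q)"
  then obtain a b where "a \<in> Poly_Mapping.keys p" "b \<in> Poly_Mapping.keys q" "m = a + b"
    using keys_mult[of p q] by blast
  then show ?thesis by (auto simp: mdeg_add)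
qed

lemma homog_mult: "homogeneous_of d p \<Longrightarrow> homogeneous_of e q \<Longrightarrow> homogeneous_of (d + e) (p * (q::('v::finite,'a::comm_ring_1) mpoly))"
  unfolding homogeneous_of_def by (metis keys_mult_mdeg)

lemma homog_unique: "homogeneous_of d p \<Longrightarrow> homogeneous_of e p \<Longrightarrow> p \<noteq> 0 \<Longrightarrow> d = e"
  unfolding homogeneous_of_def by (metis all_not_in_conv keys_eq_empty)

lemma comp_mult_homog:
  fixes x f :: "('v::finite,'a::comm_ring_1) mpoly"
  assumes "homogeneous_of e f"
  shows "hcomp (d + e) (x * f) = hcomp d x * f"
proof -
  define y where "y = x - hcomp d x"
  have x: "x = hcomp d x + y" by (simp add: y_def)
  have y0: "hcomp (d + e) (y * f) = 0"
  proof (rule poly_mapping_eqI)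
    fix m
    show "Poly_Mapping.lookup (hcomp (d + e) (y * f)) m = Poly_Mapping.lookup 0 m"
    proof (cases "m \<in> Poly_Mapping.keys (y * f)")
      case True
      then obtain a b where ab: "a \<in> Poly_Mapping.keys y" "b \<in> Poly_Mapping.keys f" "mdeg m = mdeg a + mdeg b"
        using keys_mult_mdeg by blast
      have "mdeg a \<noteq> d" using ab(1) by (auto simp: y_def in_keys_iff lookup_minus)
      moreover have "mdeg b = e" using assms ab(2) unfolding homogeneous_of_def by auto
      ultimately show ?thesis using ab(3) by simp
    next
      case False
      then show ?thesis by (simp add: in_keys_iff)
    qed
  qed
  have "hcomp (d + e) (x * f) = hcomp (d + e) (hcomp d x * f) + hcomp (d + e) (y * f)"
    by (subst x) (simp add: distrib_right comp_add)
  also have "hcomp (d + e) (hcomp d x * f) = hcomp d x * f"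
    by (rule comp_homog_same, rule homog_mult[OF homog_comp assms])
  finally show ?thesis using y0 by simp
qed

lemma comp_mult_small:
  fixes x f :: "('v::finite,'a::comm_ring_1) mpoly"
  assumes "homogeneous_of e f" "d < e"
  shows "hcomp d (x * f) = 0"
proof (rule poly_mapping_eqI)
  fix m
  show "Poly_Mapping.lookup (hcomp d (x * f)) m = Poly_Mapping.lookup 0 m"
  proof (cases "m \<in> Poly_Mapping.keys (x * f)")
    case True
    then obtain a b where ab: "a \<in> Poly_Mapping.keys x" "b \<in> Poly_Mapping.keys f" "mdeg m = mdeg a + mdeg b"
      using keys_mult_mdeg by blast
    have "mdeg b = e" using assms ab(2) unfolding homogeneous_of_def by auto
    then show ?thesis using ab(3) assms(2) by simp
  next
    case False
    then show ?thesis by (simp add: in_keys_iff)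
  qed
qed

lemma comp_mult_homog_ex:
  fixes x f :: "('v::finite,'a::comm_ring_1) mpoly"
  assumes "homogeneous_of e f"
  shows "\<exists>r. hcomp d (x * f) = r * f"
proof (cases "d < e")
  case True then show ?thesis using comp_mult_small[OF assms] by (metis mult_zero_left)
next
  case False
  then have "d = (d - e) + e" by simp
  then show ?thesis using comp_mult_homog[OF assms, of "d - e" x] by metis
qed

section \<open>Component-closed ideals\<close>

definition comp_closed :: "('v, 'a::zero) mpoly set \<Rightarrow> bool" where
  "comp_closed Q \<longleftrightarrow> (\<forall>g\<in>Q. \<forall>d. hcomp d g \<in> Q)"

lemma gen_hom_closed:
  fixes H :: "('v::finite,'a::comm_ring_1) mpoly set"
  assumes "\<forall>h\<in>H. hom h"
  shows "comp_closed (ideal_gen H)"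
proof -
  define X where "X = {g. \<forall>d. hcomp d g \<in> ideal_gen H}"
  have idl: "is_ideal X"
    unfolding is_ideal_def
  proof (intro conjI ballI allI)
    show "0 \<in> X" unfolding X_def by (simp add: ideal_0[OF ideal_gen_ideal])
  next
    fix a b assume "a \<in> X" "b \<in> X"
    then show "a + b \<in> X" unfolding X_def by (simp add: comp_add ideal_add[OF ideal_gen_ideal])
  next
    fix a r assume a: "a \<in> X"
    show "r * a \<in> X" unfolding X_def
    proof (intro CollectI allI)
      fix d
      have "hcomp d (r * a) = hcomp d (\<Sum>e \<in> mdeg ` Poly_Mapping.keys a. r * hcomp e a)"
        by (subst comp_decomp[of a]) (simp add: sum_distrib_left)
      also have "\<dots> = (\<Sum>e \<in> mdeg ` Poly_Mapping.keys a. hcomp d (r * hcomp e a))"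
        by (simp add: comp_sum)
      also have "\<dots> \<in> ideal_gen H"
      proof (rule ideal_sum[OF ideal_gen_ideal])
        fix e
        obtain s where "hcomp d (r * hcomp e a) = s * hcomp e a"
          using comp_mult_homog_ex[OF homog_comp] by blast
        then show "hcomp d (r * hcomp e a) \<in> ideal_gen H"
          using a unfolding X_def by (simp add: ideal_mul[OF ideal_gen_ideal])
      qed
      finally show "hcomp d (r * a) \<in> ideal_gen H" .
    qed
  qed
  have "H \<subseteq> X"
  proof
    fix h assume h: "h \<in> H"
    then obtain e where e: "homogeneous_of e h" using assms hom_def by blast
    show "h \<in> X" unfolding X_def
    proof (intro CollectI allI)
      fix d show "hcomp d h \<in> ideal_gen H"
        using e h ideal_gen_sub[of H] ideal_0[OF ideal_gen_ideal]
        by (cases "e = d") (auto simp: comp_homog_same comp_homog_other)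
    qed
  qed
  then have "ideal_gen H \<subseteq> X" by (rule ideal_gen_least[OF idl])
  then show ?thesis unfolding comp_closed_def X_def by blast
qed

lemma graded_closed: "graded_ideal (I::('v::finite,'a::comm_ring_1) mpoly set) \<Longrightarrow> comp_closed I"
  unfolding graded_ideal_def using gen_hom_closed[of "{f \<in> I. \<exists>d. homogeneous_of d f}"]
  by (auto simp: hom_def)

lemma mult_closed:
  fixes I1 I2 :: "('v::finite,'a::comm_ring_1) mpoly set"
  assumes c1: "comp_closed I1" and c2: "comp_closed I2" and i1: "is_ideal I1" and i2: "is_ideal I2"
  shows "comp_closed (ideal_mult I1 I2)"
proof -
  define G' where "G' = {a * b | a b. a \<in> I1 \<and> b \<in> I2 \<and> hom a \<and> hom b}"
  have "ideal_mult I1 I2 = ideal_gen G'"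
  proof
    show "ideal_gen G' \<subseteq> ideal_mult I1 I2"
      unfolding ideal_mult_def G'_def by (rule ideal_gen_mono) blast
    show "ideal_mult I1 I2 \<subseteq> ideal_gen G'"
    proof (rule ideal_mult_least[OF ideal_gen_ideal])
      fix a b assume a: "a \<in> I1" and b: "b \<in> I2"
      have "a * b = (\<Sum>p \<in> mdeg ` Poly_Mapping.keys a. \<Sum>q \<in> mdeg ` Poly_Mapping.keys b. hcomp p a * hcomp q b)"
        by (subst comp_decomp[of a], subst comp_decomp[of b]) (simp add: sum_product)
      also have "\<dots> \<in> ideal_gen G'"
      proof (intro ideal_sum[OF ideal_gen_ideal])
        fix p q
        have "hcomp p a * hcomp q b \<in> G'" unfolding G'_def
          using a b c1 c2 homog_comp unfolding comp_closed_def hom_def by blast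
        then show "hcomp p a * hcomp q b \<in> ideal_gen G'" using ideal_gen_sub by blast
      qed
      finally show "a * b \<in> ideal_gen G'" .
    qed
  qed
  moreover have "comp_closed (ideal_gen G')"
    by (rule gen_hom_closed) (auto simp: G'_def hom_def intro: homog_mult)
  ultimately show ?thesis by simp
qed

lemma pow_closed:
  "comp_closed (I::('v::finite,'a::comm_ring_1) mpoly set) \<Longrightarrow> is_ideal I \<Longrightarrow> comp_closed (ideal_pow I k)"
proof (induction k)
  case 0 then show ?case by (simp add: comp_closed_def)
next
  case (Suc k) then show ?case by (simp add: mult_closed ideal_pow_ideal)
qed

lemma colon_closed:
  fixes J :: "('v::finite,'a::comm_ring_1) mpoly set"
  assumes "comp_closed J" "homogeneous_of e f"
  shows "comp_closed (colon J f)"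
  unfolding comp_closed_def colon_def
proof (intro ballI allI, simp)
  fix g d assume "g * f \<in> J"
  then have "hcomp (d + e) (g * f) \<in> J" using assms(1) unfolding comp_closed_def by blast
  then show "hcomp d g * f \<in> J" using comp_mult_homog[OF assms(2)] by simp
qed

lemma closed_sub:
  fixes Q Q' :: "('v::finite,'a::comm_ring_1) mpoly set"
  assumes "comp_closed Q'" "is_ideal Q" "\<And>g. g \<in> Q' \<Longrightarrow> hom g \<Longrightarrow> g \<in> Q"
  shows "Q' \<subseteq> Q"
proof
  fix g assume g: "g \<in> Q'"
  have "g = (\<Sum>d \<in> mdeg ` Poly_Mapping.keys g. hcomp d g)" by (rule comp_decomp)
  also have "\<dots> \<in> Q"
    using g assms homog_comp unfolding comp_closed_def hom_def by (intro ideal_sum) blast+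
  finally show "g \<in> Q" .
qed



section \<open>A monomial order\<close>

definition iota :: "'v::finite \<Rightarrow> nat" where "iota = (SOME f. inj f)"

lemma inj_iota: "inj (iota :: 'v::finite \<Rightarrow> nat)"
proof -
  have "countable (UNIV :: 'v set)" by (rule countable_finite) simp
  then have "\<exists>f::'v \<Rightarrow> nat. inj f" unfolding countable_def by blast
  then show ?thesis unfolding iota_def by (rule someI_ex)
qed

definition mphi :: "('v::finite \<Rightarrow>\<^sub>0 nat) \<Rightarrow> (nat \<Rightarrow>\<^sub>0 nat)" where
  "mphi m = Abs_poly_mapping (\<lambda>n. if n \<in> Set.range (iota :: 'v \<Rightarrow> nat) then Poly_Mapping.lookup m (inv iota n) else 0)"

lemma lookup_phi: "Poly_Mapping.lookup (mphi (m::'v::finite \<Rightarrow>\<^sub>0 nat)) n = (if n \<in> Set.range (iota :: 'v \<Rightarrow> nat) then Poly_Mapping.lookup m (inv iota n) else 0)"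
proof -
  have "finite {n. (if n \<in> Set.range (iota :: 'v \<Rightarrow> nat) then Poly_Mapping.lookup m (inv iota n) else 0) \<noteq> 0}"
    by (rule finite_subset[of _ "Set.range (iota :: 'v \<Rightarrow> nat)"]) auto
  then show ?thesis by (simp add: mphi_def)
qed

lemma lookup_phi_iota: "Poly_Mapping.lookup (mphi m) (iota v) = Poly_Mapping.lookup m v"
  by (simp add: lookup_phi inv_f_f[OF inj_iota])

lemma mphi_inj: "mphi a = mphi b \<Longrightarrow> a = b"
  by (metis lookup_phi_iota poly_mapping_eqI)

lemma mphi_add: "mphi (a + b) = mphi a + mphi b"
  by (rule poly_mapping_eqI) (simp add: lookup_phi lookup_add)

lemma mphi_less_add: "mphi a < mphi b \<Longrightarrow> mphi (t + a) < mphi (t + b)"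
  by (simp add: mphi_add add_strict_left_mono)

lemma mphi_le_add: "mphi a \<le> mphi b \<Longrightarrow> mphi (t + a) \<le> mphi (t + b)"
  by (simp add: mphi_add add_left_mono)

definition lt :: "('v::finite, 'a::zero) mpoly \<Rightarrow> ('v \<Rightarrow>\<^sub>0 nat)" where
  "lt p = inv_into (Poly_Mapping.keys p) mphi (Max (mphi ` Poly_Mapping.keys p))"

lemma lt_props:
  assumes "p \<noteq> 0"
  shows "lt p \<in> Poly_Mapping.keys p" "\<And>m. m \<in> Poly_Mapping.keys p \<Longrightarrow> mphi m \<le> mphi (lt p)"
proof -
  have ne: "Poly_Mapping.keys p \<noteq> {}" using assms by simp
  then have M: "Max (mphi ` Poly_Mapping.keys p) \<in> mphi ` Poly_Mapping.keys p" by simp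
  then show "lt p \<in> Poly_Mapping.keys p" unfolding lt_def by (rule inv_into_into)
  have "mphi (lt p) = Max (mphi ` Poly_Mapping.keys p)" unfolding lt_def using M by (rule f_inv_into_f)
  then show "\<And>m. m \<in> Poly_Mapping.keys p \<Longrightarrow> mphi m \<le> mphi (lt p)" by simp
qed

lemma lt_in_keys: "p \<noteq> 0 \<Longrightarrow> lt p \<in> Poly_Mapping.keys p" using lt_props by blast
lemma lt_max: "p \<noteq> 0 \<Longrightarrow> m \<in> Poly_Mapping.keys p \<Longrightarrow> mphi m \<le> mphi (lt p)" using lt_props by blast

lemma lt_max_strict: "p \<noteq> 0 \<Longrightarrow> m \<in> Poly_Mapping.keys p \<Longrightarrow> m \<noteq> lt p \<Longrightarrow> mphi m < mphi (lt p)"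
  using lt_max mphi_inj by (metis order_le_imp_less_or_eq)

lemma lt_unique:
  assumes "m \<in> Poly_Mapping.keys p" "\<And>m'. m' \<in> Poly_Mapping.keys p \<Longrightarrow> mphi m' \<le> mphi m"
  shows "lt p = m"
proof -
  have p: "p \<noteq> 0" using assms(1) by auto
  have "mphi (lt p) \<le> mphi m" using assms(2) lt_in_keys[OF p] by blast
  moreover have "mphi m \<le> mphi (lt p)" using lt_max[OF p assms(1)] .
  ultimately show ?thesis using mphi_inj by (metis order_antisym)
qed

lemma lookup_single_mult:
  "Poly_Mapping.lookup (Poly_Mapping.single t c * p) k =
     (\<Sum>q. c * Poly_Mapping.lookup p q when k = t + q)"
  by (simp add: lookup_mult lookup_single when_mult Sum_any_right_distrib mult_when)

lemma lookup_single_mult_shift: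
  "Poly_Mapping.lookup (Poly_Mapping.single t c * p) (t + m) = c * Poly_Mapping.lookup (p::('v,'a::comm_ring_1) mpoly) m"
  by (simp add: lookup_single_mult)

lemma keys_single_mult: "k \<in> Poly_Mapping.keys (Poly_Mapping.single t c * p) \<Longrightarrow> \<exists>m \<in> Poly_Mapping.keys p. k = t + m"
  using keys_mult[of "Poly_Mapping.single t c" p] by (auto split: if_splits)

lemma lt_single_mult:
  fixes p :: "('v::finite,'a::field) mpoly"
  assumes "p \<noteq> 0" "c \<noteq> 0"
  shows "lt (Poly_Mapping.single t c * p) = t + lt p" "Poly_Mapping.single t c * p \<noteq> 0"
proof -
  have k: "t + lt p \<in> Poly_Mapping.keys (Poly_Mapping.single t c * p)"
    using lt_in_keys[OF assms(1)] assms(2) by (simp add: in_keys_iff lookup_single_mult_shift)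
  then show "Poly_Mapping.single t c * p \<noteq> 0" by auto
  show "lt (Poly_Mapping.single t c * p) = t + lt p"
    by (rule lt_unique[OF k]) (auto dest!: keys_single_mult intro: mphi_le_add lt_max[OF assms(1)])
qed

lemma lookup_mult_lt:
  fixes f g :: "('v::finite,'a::comm_ring_1) mpoly"
  assumes f: "f \<noteq> 0" and g: "g \<noteq> 0"
  shows "Poly_Mapping.lookup (f * g) (lt f + lt g) = Poly_Mapping.lookup f (lt f) * Poly_Mapping.lookup g (lt g)"
proof -
  define F where "F l = Poly_Mapping.lookup f l * (\<Sum>q. Poly_Mapping.lookup g q when lt f + lt g = l + q)" for l
  have z: "F l = 0" if "l \<noteq> lt f" for l
  proof (cases "Poly_Mapping.lookup f l = 0")
    case True then show ?thesis by (simp add: F_def)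
  next
    case False
    have "(Poly_Mapping.lookup g q when lt f + lt g = l + q) = 0" for q
    proof (cases "Poly_Mapping.lookup g q = 0 \<or> lt f + lt g \<noteq> l + q")
      case True then show ?thesis by auto
    next
      case c: False
      then have lq: "l \<in> Poly_Mapping.keys f" "q \<in> Poly_Mapping.keys g" using False by (auto simp: in_keys_iff)
      have "mphi l < mphi (lt f)" using lt_max_strict[OF f lq(1) that] .
      moreover have "mphi q \<le> mphi (lt g)" using lt_max[OF g lq(2)] .
      ultimately have "mphi l + mphi q < mphi (lt f) + mphi (lt g)" by (rule add_less_le_mono)
      then show ?thesis using c by (auto simp: mphi_add[symmetric])
    qed
    then show ?thesis by (simp add: F_def)
  qed
  have "Poly_Mapping.lookup (f * g) (lt f + lt g) = Sum_any F"
    by (simp add: lookup_mult F_def)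
  also have "\<dots> = sum F {lt f}"
    by (rule Sum_any.expand_superset) (use z in auto)
  also have "\<dots> = Poly_Mapping.lookup f (lt f) * Poly_Mapping.lookup g (lt g)"
    by (simp add: F_def)
  finally show ?thesis .
qed

lemma mult_nonzero:
  fixes f g :: "('v::finite,'a::field) mpoly"
  assumes "f \<noteq> 0" "g \<noteq> 0"
  shows "f * g \<noteq> 0"
proof -
  have "Poly_Mapping.lookup (f * g) (lt f + lt g) \<noteq> 0"
    using lookup_mult_lt[OF assms] lt_in_keys[OF assms(1)] lt_in_keys[OF assms(2)] by (simp add: in_keys_iff)
  then show ?thesis by auto
qed

section \<open>Dickson's lemma\<close>

definition dvdm :: "('v \<Rightarrow>\<^sub>0 nat) \<Rightarrow> ('v \<Rightarrow>\<^sub>0 nat) \<Rightarrow> bool" where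
  "dvdm a b \<longleftrightarrow> (\<forall>v. Poly_Mapping.lookup a v \<le> Poly_Mapping.lookup b v)"

lemma dvdm_decomp: "dvdm a b \<Longrightarrow> b = (b - a) + a"
  unfolding dvdm_def by (intro poly_mapping_eqI) (simp add: lookup_add lookup_minus)

lemma dickson_aux:
  fixes V :: "'v set"
  assumes "finite V"
  shows "\<forall>A::('v \<Rightarrow>\<^sub>0 nat) set. (\<forall>a\<in>A. Poly_Mapping.keys a \<subseteq> V) \<longrightarrow>
           (\<exists>B. finite B \<and> B \<subseteq> A \<and> (\<forall>a\<in>A. \<exists>b\<in>B. dvdm b a))"
  using assms
proof (induction V rule: finite_induct)
  case empty
  show ?case
  proof (intro allI impI)
    fix A :: "('v \<Rightarrow>\<^sub>0 nat) set" assume "\<forall>a\<in>A. Poly_Mapping.keys a \<subseteq> {}"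
    then have "A \<subseteq> {0}" by auto
    then show "\<exists>B. finite B \<and> B \<subseteq> A \<and> (\<forall>a\<in>A. \<exists>b\<in>B. dvdm b a)"
      by (intro exI[of _ A]) (auto simp: dvdm_def finite_subset)
  qed
next
  case (insert v V)
  show ?case
  proof (intro allI impI)
    fix A :: "('v \<Rightarrow>\<^sub>0 nat) set" assume A: "\<forall>a\<in>A. Poly_Mapping.keys a \<subseteq> insert v V"
    define proj where "proj a = a - Poly_Mapping.single v (Poly_Mapping.lookup a v)" for a :: "'v \<Rightarrow>\<^sub>0 nat"
    have lproj: "Poly_Mapping.lookup (proj a) w = (if w = v then 0 else Poly_Mapping.lookup a w)" for a w
      by (simp add: proj_def lookup_minus lookup_single when_def)
    have kproj: "a \<in> A \<Longrightarrow> Poly_Mapping.keys (proj a) \<subseteq> V" for a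
    proof
      fix x assume a: "a \<in> A" and x: "x \<in> Poly_Mapping.keys (proj a)"
      then have "x \<noteq> v" "Poly_Mapping.lookup a x \<noteq> 0" by (auto simp: in_keys_iff lproj split: if_splits)
      then have "x \<in> Poly_Mapping.keys a" by (simp add: in_keys_iff)
      then show "x \<in> V" using A a \<open>x \<noteq> v\<close> by blast
    qed
    have crit: "dvdm (proj c) (proj a) \<Longrightarrow> Poly_Mapping.lookup c v \<le> Poly_Mapping.lookup a v \<Longrightarrow> dvdm c a" for c a
      unfolding dvdm_def by (metis lproj)
    obtain B' where B': "finite B'" "B' \<subseteq> proj ` A" "\<forall>a\<in>proj ` A. \<exists>b\<in>B'. dvdm b a"
      using insert.IH[rule_format, of "proj ` A"] kproj by blast
    have "\<forall>j. \<exists>Bj. finite Bj \<and> Bj \<subseteq> proj ` {a\<in>A. Poly_Mapping.lookup a v = j} \<and>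
             (\<forall>a\<in>proj ` {a\<in>A. Poly_Mapping.lookup a v = j}. \<exists>b\<in>Bj. dvdm b a)"
    proof
      fix j
      have "\<forall>a\<in>proj ` {a\<in>A. Poly_Mapping.lookup a v = j}. Poly_Mapping.keys a \<subseteq> V"
        using kproj by blast
      then show "\<exists>Bj. finite Bj \<and> Bj \<subseteq> proj ` {a\<in>A. Poly_Mapping.lookup a v = j} \<and>
             (\<forall>a\<in>proj ` {a\<in>A. Poly_Mapping.lookup a v = j}. \<exists>b\<in>Bj. dvdm b a)"
        by (rule insert.IH[THEN spec, THEN mp])
    qed
    then have "\<exists>Bf. \<forall>j. finite (Bf j) \<and> Bf j \<subseteq> proj ` {a\<in>A. Poly_Mapping.lookup a v = j} \<and>
             (\<forall>a\<in>proj ` {a\<in>A. Poly_Mapping.lookup a v = j}. \<exists>b\<in>Bf j. dvdm b a)"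
      by (rule choice)
    then obtain Bf where Bf0: "\<forall>j. finite (Bf j) \<and> Bf j \<subseteq> proj ` {a\<in>A. Poly_Mapping.lookup a v = j} \<and>
             (\<forall>a\<in>proj ` {a\<in>A. Poly_Mapping.lookup a v = j}. \<exists>b\<in>Bf j. dvdm b a)"
      by blast
    then have Bf: "\<And>j. finite (Bf j)" "\<And>j. Bf j \<subseteq> proj ` {a\<in>A. Poly_Mapping.lookup a v = j}"
        "\<And>j. \<forall>a\<in>proj ` {a\<in>A. Poly_Mapping.lookup a v = j}. \<exists>b\<in>Bf j. dvdm b a"
      by auto
    define pre where "pre b = (SOME a. a \<in> A \<and> proj a = b)" for b
    have pre: "b \<in> proj ` A \<Longrightarrow> pre b \<in> A \<and> proj (pre b) = b" for b
      unfolding pre_def by (rule someI_ex) blast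
    define prej where "prej j b = (SOME a. a \<in> A \<and> Poly_Mapping.lookup a v = j \<and> proj a = b)" for j b
    have prej: "b \<in> proj ` {a\<in>A. Poly_Mapping.lookup a v = j} \<Longrightarrow>
        prej j b \<in> A \<and> Poly_Mapping.lookup (prej j b) v = j \<and> proj (prej j b) = b" for j b
      unfolding prej_def by (rule someI_ex) blast
    define N where "N = Max (insert 0 ((\<lambda>b. Poly_Mapping.lookup (pre b) v) ` B'))"
    have N: "b \<in> B' \<Longrightarrow> Poly_Mapping.lookup (pre b) v \<le> N" for b
      unfolding N_def using B'(1) by auto
    define B where "B = pre ` B' \<union> (\<Union>j<N. prej j ` Bf j)"
    show "\<exists>B. finite B \<and> B \<subseteq> A \<and> (\<forall>a\<in>A. \<exists>b\<in>B. dvdm b a)"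
    proof (intro exI[of _ B] conjI ballI)
      show "finite B" unfolding B_def using B'(1) Bf(1) by auto
      show "B \<subseteq> A" unfolding B_def using B'(2) Bf(2) pre prej by blast
    next
      fix a assume a: "a \<in> A"
      show "\<exists>b\<in>B. dvdm b a"
      proof (cases "N \<le> Poly_Mapping.lookup a v")
        case True
        obtain b where b: "b \<in> B'" "dvdm b (proj a)" using B'(3) a by blast
        have "pre b \<in> A \<and> proj (pre b) = b" using pre b(1) B'(2) by blast
        then have "dvdm (pre b) a" using crit b(2) N[OF b(1)] True by auto
        then show ?thesis unfolding B_def using b(1) by blast
      next
        case False
        define j where "j = Poly_Mapping.lookup a v"
        have aj: "proj a \<in> proj ` {a\<in>A. Poly_Mapping.lookup a v = j}" using a j_def by blast
        obtain b where b: "b \<in> Bf j" "dvdm b (proj a)" using Bf(3) aj by blast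
        have "prej j b \<in> A \<and> Poly_Mapping.lookup (prej j b) v = j \<and> proj (prej j b) = b"
          using prej b(1) Bf(2) by blast
        then have "dvdm (prej j b) a" using crit b(2) j_def by auto
        moreover have "j < N" using False j_def by simp
        ultimately show ?thesis unfolding B_def using b(1) by blast
      qed
    qed
  qed
qed

lemma dickson:
  fixes A :: "('v::finite \<Rightarrow>\<^sub>0 nat) set"
  shows "\<exists>B. finite B \<and> B \<subseteq> A \<and> (\<forall>a\<in>A. \<exists>b\<in>B. dvdm b a)"
  using dickson_aux[of "UNIV :: 'v set"] by auto



definition LM :: "('v::finite, 'a::field) mpoly set \<Rightarrow> ('v \<Rightarrow>\<^sub>0 nat) set" where
  "LM Q = {lt p | p. p \<in> Q \<and> p \<noteq> 0 \<and> hom p}"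

lemma LM_mono: "Q \<subseteq> Q' \<Longrightarrow> LM Q \<subseteq> LM Q'"
  unfolding LM_def by blast

lemma homog_single: "homogeneous_of (mdeg t) (Poly_Mapping.single t c)"
  unfolding homogeneous_of_def by simp

lemma mdeg_zero [simp]: "mdeg (0::'v::finite \<Rightarrow>\<^sub>0 nat) = 0"
  by (simp add: mdeg_0_iff)

lemma LM_up:
  fixes Q :: "('v::finite,'a::field) mpoly set"
  assumes Q: "is_ideal Q" and m: "m \<in> LM Q" and d: "dvdm m m'"
  shows "m' \<in> LM Q"
proof -
  obtain p where p: "p \<in> Q" "p \<noteq> 0" "hom p" "lt p = m" using m unfolding LM_def by blast
  define t where "t = m' - m"
  have m': "m' = t + m" using dvdm_decomp[OF d] by (simp add: t_def)
  define p' where "p' = Poly_Mapping.single t (1::'a) * p"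
  have "p' \<in> Q" unfolding p'_def using ideal_mul[OF Q p(1)] .
  moreover have "p' \<noteq> 0" "lt p' = m'" unfolding p'_def using lt_single_mult[OF p(2), of 1 t] p(4) m' by auto
  moreover have "hom p'" using p(3) homog_mult[OF homog_single] unfolding p'_def hom_def by blast
  ultimately show ?thesis unfolding LM_def by blast
qed

lemma hcomp_zero_if: "(\<And>m. m \<in> Poly_Mapping.keys x \<Longrightarrow> mdeg m \<noteq> d) \<Longrightarrow> hcomp d x = 0"
  by (rule poly_mapping_eqI) (auto simp: in_keys_iff)

lemma homog_lt_deg: "homogeneous_of d g \<Longrightarrow> g \<noteq> 0 \<Longrightarrow> mdeg (lt g) = d"
  unfolding homogeneous_of_def using lt_in_keys by blast

lemma lookup_scal: "Poly_Mapping.lookup (Poly_Mapping.single 0 c * h) m = c * Poly_Mapping.lookup (h::('v,'a::comm_ring_1) mpoly) m"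
  using lookup_single_mult_shift[of 0 c h m] by simp

lemma LM_eq:
  fixes Q Q' :: "('v::finite, 'a::field) mpoly set"
  assumes Q: "is_ideal Q" and Q': "is_ideal Q'" and cc: "comp_closed Q'" and sub: "Q \<subseteq> Q'"
    and L: "LM Q' \<subseteq> LM Q"
  shows "Q' \<subseteq> Q"
proof (rule closed_sub[OF cc Q])
  have main: "\<forall>g. homogeneous_of d g \<longrightarrow> g \<in> Q' \<longrightarrow> card {m::'v \<Rightarrow>\<^sub>0 nat. mdeg m = d \<and> mphi m < mphi (lt g)} = n \<longrightarrow> g \<in> Q" for d n
  proof (induction n rule: less_induct)
    case (less n)
    show ?case
    proof (intro allI impI)
      fix g assume g: "homogeneous_of d g" "g \<in> Q'" and n: "card {m::'v \<Rightarrow>\<^sub>0 nat. mdeg m = d \<and> mphi m < mphi (lt g)} = n"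
      show "g \<in> Q"
      proof (cases "g = 0")
        case True then show ?thesis using ideal_0[OF Q] by simp
      next
        case g0: False
        have "lt g \<in> LM Q'" unfolding LM_def using g g0 hom_def by blast
        then have "lt g \<in> LM Q" using L by blast
        then obtain h where h: "h \<in> Q" "h \<noteq> 0" "hom h" "lt h = lt g" unfolding LM_def by auto
        obtain e where e: "homogeneous_of e h" using h(3) hom_def by blast
        have ed: "e = d" using homog_lt_deg[OF e h(2)] homog_lt_deg[OF g(1) g0] h(4) by simp
        define c where "c = Poly_Mapping.lookup g (lt g) / Poly_Mapping.lookup h (lt g)"
        define s where "s = Poly_Mapping.single 0 c * h"
        define g' where "g' = g - s"
        have hlt: "Poly_Mapping.lookup h (lt g) \<noteq> 0" using lt_in_keys[OF h(2)] h(4) by (simp add: in_keys_iff)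
        have sQ: "s \<in> Q" unfolding s_def using ideal_mul[OF Q h(1)] .
        have g'Q': "g' \<in> Q'" unfolding g'_def using ideal_diff[OF Q' g(2)] sQ sub by blast
        have sh: "homogeneous_of d s" unfolding s_def
          using homog_mult[OF homog_single e, of 0 c] ed by simp
        have g'h: "homogeneous_of d g'" unfolding g'_def
          using homog_diff[OF g(1) sh] .
        show "g \<in> Q"
        proof (cases "g' = 0")
          case True
          then have "g = s" unfolding g'_def by simp
          then show ?thesis using sQ by simp
        next
          case g'0: False
          have ks: "k \<in> Poly_Mapping.keys s \<Longrightarrow> k \<in> Poly_Mapping.keys h" for k
            unfolding s_def by (auto dest: keys_single_mult)
          have le: "mphi (lt g') \<le> mphi (lt g)"
          proof -
            have "lt g' \<in> Poly_Mapping.keys g \<union> Poly_Mapping.keys s"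
              using lt_in_keys[OF g'0] keys_diff[of g s] unfolding g'_def by blast
            then show ?thesis
              using lt_max[OF g0] lt_max[OF h(2)] h(4) ks by auto
          qed
          have ne: "lt g' \<noteq> lt g"
          proof -
            have "Poly_Mapping.lookup g' (lt g) = 0"
              unfolding g'_def s_def using hlt by (simp add: lookup_minus lookup_scal c_def)
            then show ?thesis using lt_in_keys[OF g'0] by (auto simp: in_keys_iff)
          qed
          have lt_less: "mphi (lt g') < mphi (lt g)"
            using le ne mphi_inj by (metis order_le_imp_less_or_eq)
          have dg': "mdeg (lt g') = d" using homog_lt_deg[OF g'h g'0] .
          define S where "S x = {m::'v \<Rightarrow>\<^sub>0 nat. mdeg m = d \<and> mphi m < mphi (lt x)}" for x :: "('v, 'a) mpoly"
          have "S g' \<subset> S g"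
          proof
            show "S g' \<subseteq> S g" unfolding S_def using lt_less by auto
            have "lt g' \<in> S g" "lt g' \<notin> S g'" unfolding S_def using lt_less dg' by auto
            then show "S g' \<noteq> S g" by blast
          qed
          moreover have "finite (S g)" unfolding S_def by (rule finite_subset[OF _ finite_mdeg[of d]]) auto
          ultimately have "card (S g') < card (S g)" by (rule psubset_card_mono[rotated])
          then have "card (S g') < n" using n unfolding S_def by simp
          then have "g' \<in> Q" using less.IH[of "card (S g')"] g'h g'Q' unfolding S_def by blast
          then have "g' + s \<in> Q" using sQ ideal_add[OF Q] by blast
          then show ?thesis unfolding g'_def by simp
        qed
      qed
    qed
  qed
  fix g assume "g \<in> Q'" "hom g"
  then show "g \<in> Q" using main unfolding hom_def by blast
qed

section \<open>Maximal colon ideals\<close>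

lemma one_homog: "homogeneous_of 0 (1::('v::finite,'a::comm_ring_1) mpoly)"
  unfolding homogeneous_of_def by (simp add: mdeg_0_iff)

lemma chain_max:
  assumes "finite F" "F \<noteq> {}" "chain\<^sub>\<subseteq> F"
  shows "\<exists>M\<in>F. \<forall>X\<in>F. X \<subseteq> M"
  using assms
proof (induction F rule: finite_ne_induct)
  case (singleton x) then show ?case by auto
next
  case (insert x F)
  then have "chain\<^sub>\<subseteq> F" unfolding chain_subset_def by blast
  then obtain M where M: "M \<in> F" "\<forall>X\<in>F. X \<subseteq> M" using insert by blast
  have "x \<subseteq> M \<or> M \<subseteq> x" using insert.prems M(1) unfolding chain_subset_def by blast
  then show ?case using M by blast
qed

lemma exists_max_colon:
  fixes J :: "('v::finite, 'a::field) mpoly set"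
  assumes J: "is_ideal J" and cc: "comp_closed J" and one: "1 \<notin> J"
  shows "\<exists>f. hom f \<and> f \<notin> J \<and> (\<forall>g. hom g \<and> g \<notin> J \<and> colon J f \<subseteq> colon J g \<longrightarrow> colon J g = colon J f)"
proof -
  define A where "A = {colon J g | g. hom g \<and> g \<notin> J}"
  have JA: "colon J 1 \<in> A" unfolding A_def using one one_homog hom_def by blast
  have "\<exists>M\<in>A. \<forall>X\<in>A. M \<subseteq> X \<longrightarrow> X = M"
  proof (rule Zorn_Lemma2, intro ballI)
    fix Ch assume Ch: "Ch \<in> chains A"
    then have ChA: "Ch \<subseteq> A" and chain: "chain\<^sub>\<subseteq> Ch" unfolding chains_def by auto
    have memA: "X \<in> A \<Longrightarrow> is_ideal X \<and> comp_closed X" for X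
      unfolding A_def using colon_ideal[OF J] colon_closed[OF cc] hom_def by blast
    show "\<exists>U\<in>A. \<forall>X\<in>Ch. X \<subseteq> U"
    proof (cases "Ch = {}")
      case True then show ?thesis using JA by blast
    next
      case False
      then obtain Q0 where Q0: "Q0 \<in> Ch" by blast
      obtain B where B: "finite B" "B \<subseteq> \<Union>(LM ` Ch)" "\<forall>a\<in>\<Union>(LM ` Ch). \<exists>b\<in>B. dvdm b a"
        using dickson[of "\<Union>(LM ` Ch)"] by auto
      have "\<forall>b\<in>B. \<exists>Q\<in>Ch. b \<in> LM Q" using B(2) by blast
      then obtain Qb where Qb: "\<And>b. b \<in> B \<Longrightarrow> Qb b \<in> Ch \<and> b \<in> LM (Qb b)" by metis
      define F where "F = insert Q0 (Qb ` B)"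
      have "finite F" "F \<noteq> {}" "chain\<^sub>\<subseteq> F" unfolding F_def using B(1) chain Q0 Qb
        by (auto simp: chain_subset_def)
      then obtain Qm where Qm: "Qm \<in> F" "\<forall>X\<in>F. X \<subseteq> Qm" using chain_max by blast
      have QmCh: "Qm \<in> Ch" using Qm(1) Q0 Qb unfolding F_def by blast
      have Qmi: "is_ideal Qm" "comp_closed Qm" using memA ChA QmCh by auto
      have LMall: "LM X \<subseteq> LM Qm" if X: "X \<in> Ch" for X
      proof
        fix u assume "u \<in> LM X"
        then obtain b where b: "b \<in> B" "dvdm b u" using B(3) X by blast
        have "b \<in> LM (Qb b)" using Qb b(1) by blast
        moreover have "Qb b \<subseteq> Qm" using Qm(2) b(1) unfolding F_def by blast
        ultimately have "b \<in> LM Qm" using LM_mono by blast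
        then show "u \<in> LM Qm" using LM_up[OF Qmi(1)] b(2) by blast
      qed
      have "X \<subseteq> Qm" if X: "X \<in> Ch" for X
      proof -
        have "X \<subseteq> Qm \<or> Qm \<subseteq> X" using chain X QmCh unfolding chain_subset_def by blast
        moreover have "Qm \<subseteq> X \<Longrightarrow> X \<subseteq> Qm"
          using LM_eq[OF Qmi(1), of X] memA ChA X LMall[OF X] by blast
        ultimately show ?thesis by blast
      qed
      then show ?thesis using QmCh ChA by blast
    qed
  qed
  then obtain M where M: "M \<in> A" "\<forall>X\<in>A. M \<subseteq> X \<longrightarrow> X = M" by blast
  then obtain f where f: "M = colon J f" "hom f" "f \<notin> J" unfolding A_def by blast
  show ?thesis
  proof (intro exI[of _ f] conjI allI impI)
    fix g assume "hom g \<and> g \<notin> J \<and> colon J f \<subseteq> colon J g"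
    then show "colon J g = colon J f" using M(2) f unfolding A_def by blast
  qed (use f in auto)
qed



section \<open>Graded primes\<close>

lemma top_deg:
  assumes "a \<noteq> 0"
  shows "Max (mdeg ` Poly_Mapping.keys a) \<in> mdeg ` Poly_Mapping.keys a"
    "\<And>m. m \<in> Poly_Mapping.keys a \<Longrightarrow> mdeg m \<le> Max (mdeg ` Poly_Mapping.keys a)"
  using assms by auto

lemma keys_minus_top:
  "m \<in> Poly_Mapping.keys (a - hcomp t a) \<longleftrightarrow> m \<in> Poly_Mapping.keys (a::('v,'a::ab_group_add) mpoly) \<and> mdeg m \<noteq> t"
  by (auto simp: in_keys_iff lookup_minus)

lemma top_comp:
  fixes a b :: "('v::finite,'a::comm_ring_1) mpoly"
  assumes a0: "a \<noteq> 0" and b0: "b \<noteq> 0"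
  defines "ta \<equiv> Max (mdeg ` Poly_Mapping.keys a)" and "tb \<equiv> Max (mdeg ` Poly_Mapping.keys b)"
  shows "hcomp (ta + tb) (a * b) = hcomp ta a * hcomp tb b"
proof -
  define A where "A = hcomp ta a"
  define B where "B = hcomp tb b"
  define a' where "a' = a - A"
  define b' where "b' = b - B"
  have ka': "m \<in> Poly_Mapping.keys a' \<Longrightarrow> mdeg m < ta" for m
  proof -
    assume "m \<in> Poly_Mapping.keys a'"
    then have "m \<in> Poly_Mapping.keys a" "mdeg m \<noteq> ta" unfolding a'_def A_def keys_minus_top by auto
    then show ?thesis using top_deg(2)[OF a0, of m] unfolding ta_def by linarith
  qed
  have kb': "m \<in> Poly_Mapping.keys b' \<Longrightarrow> mdeg m < tb" for m
  proof -
    assume "m \<in> Poly_Mapping.keys b'"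
    then have "m \<in> Poly_Mapping.keys b" "mdeg m \<noteq> tb" unfolding b'_def B_def keys_minus_top by auto
    then show ?thesis using top_deg(2)[OF b0, of m] unfolding tb_def by linarith
  qed
  have kA: "m \<in> Poly_Mapping.keys A \<Longrightarrow> mdeg m = ta" for m unfolding A_def keys_comp by auto
  have kb: "m \<in> Poly_Mapping.keys b \<Longrightarrow> mdeg m \<le> tb" for m using top_deg(2)[OF b0] tb_def by auto
  have eq: "a * b = A * B + (A * b' + a' * b)"
    unfolding a'_def b'_def by (simp add: algebra_simps)
  have z1: "hcomp (ta + tb) (A * b') = 0"
    by (rule hcomp_zero_if) (metis kA kb' keys_mult_mdeg nat_add_left_cancel_less less_irrefl)
  have z2: "hcomp (ta + tb) (a' * b) = 0"
    by (rule hcomp_zero_if) (metis ka' kb keys_mult_mdeg add_less_le_mono less_irrefl)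
  have "hcomp (ta + tb) (A * B) = A * B"
    unfolding A_def B_def by (rule comp_homog_same, rule homog_mult[OF homog_comp homog_comp])
  then show ?thesis using z1 z2 by (simp add: eq comp_add A_def B_def)
qed

lemma card_keys_minus_top:
  assumes "a \<noteq> 0"
  shows "card (Poly_Mapping.keys (a - hcomp (Max (mdeg ` Poly_Mapping.keys a)) a)) < card (Poly_Mapping.keys (a::('v,'a::ab_group_add) mpoly))"
proof (rule psubset_card_mono)
  show "finite (Poly_Mapping.keys a)" by simp
  obtain m0 where m0: "m0 \<in> Poly_Mapping.keys a" "mdeg m0 = Max (mdeg ` Poly_Mapping.keys a)"
    using top_deg(1)[OF assms] by auto
  show "Poly_Mapping.keys (a - hcomp (Max (mdeg ` Poly_Mapping.keys a)) a) \<subset> Poly_Mapping.keys a"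
  proof
    show "Poly_Mapping.keys (a - hcomp (Max (mdeg ` Poly_Mapping.keys a)) a) \<subseteq> Poly_Mapping.keys a"
      using keys_minus_top by blast
    have "m0 \<notin> Poly_Mapping.keys (a - hcomp (Max (mdeg ` Poly_Mapping.keys a)) a)"
      using m0 keys_minus_top by blast
    then show "Poly_Mapping.keys (a - hcomp (Max (mdeg ` Poly_Mapping.keys a)) a) \<noteq> Poly_Mapping.keys a"
      using m0(1) by blast
  qed
qed

lemma graded_prime:
  fixes Q :: "('v::finite,'a::field) mpoly set"
  assumes Q: "is_ideal Q" and cc: "comp_closed Q"
    and hp: "\<And>a b. hom a \<Longrightarrow> hom b \<Longrightarrow> a * b \<in> Q \<Longrightarrow> a \<in> Q \<or> b \<in> Q"
  shows "a * b \<in> Q \<Longrightarrow> a \<in> Q \<or> b \<in> Q"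
proof -
  have main: "\<forall>a b. card (Poly_Mapping.keys a) + card (Poly_Mapping.keys b) = n \<longrightarrow> a \<notin> Q \<longrightarrow> b \<notin> Q \<longrightarrow> a * b \<notin> Q" for n
  proof (induction n rule: less_induct)
    case (less n)
    show ?case
    proof (intro allI impI)
      fix a b :: "('v,'a) mpoly"
      assume n: "card (Poly_Mapping.keys a) + card (Poly_Mapping.keys b) = n" and a: "a \<notin> Q" and b: "b \<notin> Q"
      have a0: "a \<noteq> 0" and b0: "b \<noteq> 0" using a b ideal_0[OF Q] by auto
      define ta where "ta = Max (mdeg ` Poly_Mapping.keys a)"
      define tb where "tb = Max (mdeg ` Poly_Mapping.keys b)"
      show "a * b \<notin> Q"
      proof (cases "hcomp ta a \<in> Q")
        case True
        define a' where "a' = a - hcomp ta a"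
        have "a' \<notin> Q" using a True ideal_add[OF Q, of a' "hcomp ta a"] unfolding a'_def by auto
        moreover have "card (Poly_Mapping.keys a') < card (Poly_Mapping.keys a)"
          unfolding a'_def ta_def by (rule card_keys_minus_top[OF a0])
        ultimately have "a' * b \<notin> Q" using less.IH[of "card (Poly_Mapping.keys a') + card (Poly_Mapping.keys b)"] n b by auto
        moreover have "a' * b = a * b - hcomp ta a * b" unfolding a'_def by (simp add: algebra_simps)
        ultimately show ?thesis using ideal_diff[OF Q, of "a * b" "hcomp ta a * b"] ideal_mul2[OF Q True] by auto
      next
        case nA: False
        show ?thesis
        proof (cases "hcomp tb b \<in> Q")
          case True
          define b' where "b' = b - hcomp tb b"
          have "b' \<notin> Q" using b True ideal_add[OF Q, of b' "hcomp tb b"] unfolding b'_def by auto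
          moreover have "card (Poly_Mapping.keys b') < card (Poly_Mapping.keys b)"
            unfolding b'_def tb_def by (rule card_keys_minus_top[OF b0])
          ultimately have "a * b' \<notin> Q" using less.IH[of "card (Poly_Mapping.keys a) + card (Poly_Mapping.keys b')"] n a by auto
          moreover have "a * b' = a * b - a * hcomp tb b" unfolding b'_def by (simp add: algebra_simps)
          ultimately show ?thesis using ideal_diff[OF Q, of "a * b" "a * hcomp tb b"] ideal_mul[OF Q True] by auto
        next
          case nB: False
          have "hcomp ta a * hcomp tb b \<notin> Q"
            using hp[of "hcomp ta a" "hcomp tb b"] nA nB homog_comp unfolding hom_def by blast
          then show ?thesis using top_comp[OF a0 b0] cc unfolding comp_closed_def ta_def tb_def by metis
        qed
      qed
    qed
  qed
  assume "a * b \<in> Q"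
  then show ?thesis using main by blast
qed

lemma max_colon_prime:
  fixes J :: "('v::finite, 'a::field) mpoly set"
  assumes J: "is_ideal J" and cc: "comp_closed J" and f: "hom f" "f \<notin> J"
    and mx: "\<forall>g. hom g \<and> g \<notin> J \<and> colon J f \<subseteq> colon J g \<longrightarrow> colon J g = colon J f"
  shows "prime_ideal (colon J f)"
proof -
  have Qi: "is_ideal (colon J f)" by (rule colon_ideal[OF J])
  obtain e where e: "homogeneous_of e f" using f(1) hom_def by blast
  have Qc: "comp_closed (colon J f)" by (rule colon_closed[OF cc e])
  have ne: "colon J f \<noteq> UNIV"
  proof
    assume "colon J f = UNIV"
    then have "1 \<in> colon J f" by simp
    then show False using f(2) unfolding colon_def by simp
  qed
  have hp: "a \<in> colon J f \<or> b \<in> colon J f" if ab: "hom a" "hom b" "a * b \<in> colon J f" for a b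
  proof (cases "a \<in> colon J f")
    case True then show ?thesis by simp
  next
    case na: False
    then have af: "a * f \<notin> J" unfolding colon_def by simp
    have haf: "hom (a * f)" using ab(1) f(1) homog_mult unfolding hom_def by blast
    have "colon J f \<subseteq> colon J (a * f)"
    proof
      fix x assume "x \<in> colon J f"
      then have "a * (x * f) \<in> J" unfolding colon_def by (simp add: ideal_mul[OF J])
      then show "x \<in> colon J (a * f)" unfolding colon_def by (simp add: mult.left_commute)
    qed
    then have eq: "colon J (a * f) = colon J f" using mx haf af by blast
    have "b * (a * f) \<in> J" using ab(3) unfolding colon_def by (simp add: mult.assoc mult.left_commute mult.commute)
    then have "b \<in> colon J (a * f)" unfolding colon_def by simp
    then show ?thesis using eq by simp
  qed
  show ?thesis unfolding prime_ideal_def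
    using Qi ne graded_prime[OF Qi Qc hp] by blast
qed

section \<open>Degree bounds\<close>

definition Hdeg :: "nat \<Rightarrow> ('v::finite, 'a::comm_ring_1) mpoly set" where
  "Hdeg e = {p. \<forall>m\<in>Poly_Mapping.keys p. e \<le> mdeg m}"

lemma Hdeg_ideal: "is_ideal (Hdeg e :: ('v::finite, 'a::comm_ring_1) mpoly set)"
  unfolding is_ideal_def Hdeg_def
proof (intro conjI ballI allI; clarsimp)
  fix a b :: "('v, 'a) mpoly" and m
  assume "\<forall>m\<in>Poly_Mapping.keys a. e \<le> mdeg m" "\<forall>m\<in>Poly_Mapping.keys b. e \<le> mdeg m" "m \<in> Poly_Mapping.keys (a + b)"
  then show "e \<le> mdeg m" using keys_add[of a b] by blast
next
  fix a r :: "('v, 'a) mpoly" and m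
  assume "\<forall>m\<in>Poly_Mapping.keys a. e \<le> mdeg m" "m \<in> Poly_Mapping.keys (r * a)"
  then show "e \<le> mdeg m" using keys_mult_mdeg[of m r a] by force
qed

lemma Hdeg_mult: "ideal_mult (Hdeg a) (Hdeg b) \<subseteq> (Hdeg (a + b) :: ('v::finite, 'a::comm_ring_1) mpoly set)"
proof (rule ideal_mult_least[OF Hdeg_ideal])
  fix x y :: "('v, 'a) mpoly" assume "x \<in> Hdeg a" "y \<in> Hdeg b"
  then show "x * y \<in> Hdeg (a + b)" unfolding Hdeg_def using keys_mult_mdeg[of _ x y] by (force intro: add_mono)
qed

lemma I_Hdeg:
  fixes I :: "('v::finite, 'a::comm_ring_1) mpoly set"
  assumes "graded_ideal I"
  shows "I \<subseteq> Hdeg (alpha I)"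
proof -
  have "ideal_gen {f \<in> I. \<exists>d. homogeneous_of d f} \<subseteq> Hdeg (alpha I)"
  proof (rule ideal_gen_least[OF Hdeg_ideal], clarify)
    fix f d assume f: "f \<in> I" "homogeneous_of d f"
    show "f \<in> Hdeg (alpha I)"
    proof (cases "f = 0")
      case True then show ?thesis by (simp add: Hdeg_def)
    next
      case False
      then have "alpha I \<le> d" unfolding alpha_def using f by (intro Least_le) (auto simp: Sdeg_def)
      then show ?thesis using f(2) unfolding Hdeg_def homogeneous_of_def by auto
    qed
  qed
  then show ?thesis using assms unfolding graded_ideal_def by simp
qed

lemma pow_Hdeg:
  fixes I :: "('v::finite, 'a::comm_ring_1) mpoly set"
  assumes "graded_ideal I"
  shows "ideal_pow I k \<subseteq> Hdeg (alpha I * k)"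
proof (induction k)
  case 0 then show ?case by (auto simp: Hdeg_def)
next
  case (Suc k)
  have "ideal_pow I (Suc k) \<subseteq> ideal_mult (Hdeg (alpha I * k)) (Hdeg (alpha I))"
    using ideal_mult_mono[OF Suc I_Hdeg[OF assms]] by simp
  also have "\<dots> \<subseteq> Hdeg (alpha I * k + alpha I)" by (rule Hdeg_mult)
  finally show ?case by (simp add: add.commute)
qed

lemma alpha_witness:
  fixes I :: "('v::finite, 'a::comm_ring_1) mpoly set"
  assumes "graded_ideal I" "I \<noteq> {0}"
  shows "\<exists>g\<in>I. g \<noteq> 0 \<and> g \<in> Sdeg (alpha I)"
proof -
  have Ii: "is_ideal I" using assms(1) unfolding graded_ideal_def by simp
  obtain p where p: "p \<in> I" "p \<noteq> 0" using assms(2) ideal_0[OF Ii] by blast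
  then obtain m where m: "m \<in> Poly_Mapping.keys p" by fastforce
  define g where "g = hcomp (mdeg m) p"
  have "g \<in> I" using graded_closed[OF assms(1)] p(1) unfolding comp_closed_def g_def by blast
  moreover have "g \<noteq> 0" using m unfolding g_def by (metis (mono_tags, lifting) in_keys_iff lookup_comp lookup_zero)
  moreover have "g \<in> Sdeg (mdeg m)" unfolding g_def Sdeg_def using homog_comp by blast
  ultimately have "\<exists>d. \<exists>g\<in>I. g \<noteq> 0 \<and> g \<in> Sdeg d" by blast
  then show ?thesis unfolding alpha_def by (rule LeastI_ex)
qed

lemma alpha_pos:
  fixes I :: "('v::finite, 'a::field) mpoly set"
  assumes "graded_ideal I" "I \<noteq> {0}" "I \<noteq> UNIV"
  shows "alpha I \<ge> 1"
proof (rule ccontr)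
  assume "\<not> alpha I \<ge> 1"
  then have a0: "alpha I = 0" by simp
  have Ii: "is_ideal I" using assms(1) unfolding graded_ideal_def by simp
  obtain g where g: "g \<in> I" "g \<noteq> 0" "homogeneous_of 0 g" using alpha_witness[OF assms(1,2)] a0 Sdeg_def by auto
  have keys: "Poly_Mapping.keys g \<subseteq> {0}" using g(3) unfolding homogeneous_of_def by (auto simp: mdeg_0_iff)
  define c where "c = Poly_Mapping.lookup g 0"
  have gc: "g = Poly_Mapping.single 0 c"
    by (rule poly_mapping_eqI) (use keys in \<open>auto simp: c_def lookup_single when_def in_keys_iff\<close>)
  have "c \<noteq> 0" using g(2) gc by auto
  have "Poly_Mapping.single 0 (inverse c) * g = 1"
    using \<open>c \<noteq> 0\<close> by (simp add: gc mult_single)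
  then have "1 \<in> I" using ideal_mul[OF Ii g(1)] by metis
  then show False using ideal_one[OF Ii] assms(3) by simp
qed

lemma vnum_bound:
  fixes I :: "('v::finite, 'a::field) mpoly set"
  assumes gr: "graded_ideal I" and nz: "I \<noteq> {0}" and k: "k \<ge> 1"
    and P: "prime_ideal (colon (ideal_pow I k) f)" and f: "homogeneous_of d f"
  shows "alpha I * k \<le> alpha I + d"
proof -
  define J where "J = ideal_pow I k"
  have J: "is_ideal J" unfolding J_def by (rule ideal_pow_ideal)
  have fJ: "f \<notin> J"
  proof
    assume "f \<in> J"
    then have "colon J f = UNIV" unfolding colon_def using ideal_mul[OF J] by auto
    then show False using P unfolding prime_ideal_def J_def by simp
  qed
  then have f0: "f \<noteq> 0" using ideal_0[OF J] by auto
  obtain g where g: "g \<in> I" "g \<noteq> 0" "homogeneous_of (alpha I) g" using alpha_witness[OF gr nz] Sdeg_def by auto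
  have "g ^ k \<in> J" unfolding J_def by (rule power_in_ideal_pow[OF g(1)])
  then have "g ^ k \<in> colon J f" using colon_sup[OF J] by blast
  then have "g \<in> colon J f" using prime_pow[of _ g k] P k unfolding J_def by simp
  then have "g * f \<in> J" unfolding colon_def by simp
  then have gfH: "g * f \<in> Hdeg (alpha I * k)" using pow_Hdeg[OF gr] unfolding J_def by blast
  have gf0: "g * f \<noteq> 0" by (rule mult_nonzero[OF g(2) f0])
  then obtain m where m: "m \<in> Poly_Mapping.keys (g * f)" by fastforce
  have "mdeg m = alpha I + d" using homog_mult[OF g(3) f] m unfolding homogeneous_of_def by blast
  moreover have "alpha I * k \<le> mdeg m" using gfH m unfolding Hdeg_def by blast
  ultimately show ?thesis by simp
qed

theorem lemma4p4:
  fixes I :: "('v::finite, 'a::field) mpoly set"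
  assumes "graded_ideal I" and "I \<noteq> {0}" and "I \<noteq> UNIV"
  shows "\<exists>c::int. \<exists>k0. \<forall>k\<ge>k0. int (vnum (ideal_pow I k)) \<ge> int (alpha I) * int k + c"
proof (intro exI allI impI)
  fix k :: nat assume k: "k \<ge> 1"
  define J where "J = ideal_pow I k"
  have Ii: "is_ideal I" using assms(1) unfolding graded_ideal_def by simp
  have J: "is_ideal J" unfolding J_def by (rule ideal_pow_ideal)
  have cc: "comp_closed J" unfolding J_def by (rule pow_closed[OF graded_closed[OF assms(1)] Ii])
  have a1: "alpha I \<ge> 1" by (rule alpha_pos[OF assms])
  have one: "1 \<notin> J"
  proof
    assume "1 \<in> J"
    then have "(1::('v,'a) mpoly) \<in> Hdeg (alpha I * k)" using pow_Hdeg[OF assms(1), of k] unfolding J_def by blast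
    moreover have "alpha I * k \<ge> 1" using a1 k by simp
    ultimately show False unfolding Hdeg_def by simp
  qed
  obtain f where f: "hom f" "f \<notin> J" "\<forall>g. hom g \<and> g \<notin> J \<and> colon J f \<subseteq> colon J g \<longrightarrow> colon J g = colon J f"
    using exists_max_colon[OF J cc one] by blast
  have pr: "prime_ideal (colon J f)" by (rule max_colon_prime[OF J cc f])
  obtain d where d: "homogeneous_of d f" using f(1) hom_def by blast
  have "\<exists>d. \<exists>f\<in>Sdeg d. colon J f \<in> Ass J"
    using pr d unfolding Ass_def Sdeg_def by blast
  then have "\<exists>f\<in>Sdeg (vnum J). colon J f \<in> Ass J" unfolding vnum_def by (rule LeastI_ex)
  then obtain f0 where f0: "homogeneous_of (vnum J) f0" "prime_ideal (colon J f0)"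
    unfolding Sdeg_def Ass_def by blast
  have "alpha I * k \<le> alpha I + vnum J"
    by (rule vnum_bound[OF assms(1,2) k]) (use f0 J_def in auto)
  then have "int (alpha I) * int k \<le> int (alpha I) + int (vnum J)"
    by (metis of_nat_add of_nat_le_iff of_nat_mult)
  then show "int (vnum (ideal_pow I k)) \<ge> int (alpha I) * int k + - int (alpha I)"
    unfolding J_def by simp
qed

end
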